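(* Assume the $q$-Extended Church–Turing Thesis holds for a computable monotonically increasing overhead function $q:\mathbb N\times\mathbb N\to\mathbb N$. Let $\mathcal D$ be an enumerable domain and let $Q:\mathbb N\times\mathbb N\to\mathbb N$ be a computable monotonically increasing function. Then there exists an algorithm that solves the $\mathbf Q(\mathcal M_{\mathcal D},\mathcal D)$-learning problem from input-output observations, i.e. it learns in the limit, from input-output observations and arbitrary (restricted) input sources $I\subseteq\mathcal D$, every function in $\mathbf Q(\mathcal M_{\mathcal D},\mathcal D)$.
   Context: Learning framework. Let $\mathcal D$ be an enumerable domain. A computational model $M$ on $\mathcal D$ is a computable discrete-time dynamical system together with an input-setting and output-reading convention; it computes a partial (general recursive) function $f_M:\mathcal D\rightharpoonup\mathcal D$ defined exactly on the set $D_M\subseteq\mathcal D$ of inputs on which $M$ halts; $t_M(x)$ is the number of discrete steps $M$ takes on $x\in D_M$. $\mathcal M_{\mathcal D}$ is the set of all computational models on $\mathcal D$; the functions they compute are exactly the general recursive functions $G_{\mathcal D}$. For $\mathcal M\subseteq\mathcal M_{\mathcal D}$, $\mathcal F_{\mathcal M}$ is the set of functions computed by models in $\mathcal M$. An observation map $\alpha$ assigns to a model $M$ and $x\in D_M$ auxiliary information $\alpha(M,x)$; the example of $x$ is $\eta_M(x)=(x,f_M(x),\alpha(M,x))$ and $E_M(S)=\{\eta_M(x):x\in S\}$. A learner $\mathcal L$ solves the $(\mathcal M,\alpha)$-learning problem if there are a computable set of representations $\mathcal R$ and a simulation map $\mathfrak S:\mathcal R\to G_{\mathcal D}$ such that for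 every $M\in\mathcal M$, every input source $I\subseteq\mathcal D$ and every surjection $w:\mathbb N\to I_M:=I\cap D_M$, the hypotheses $R_t=\mathcal L(\eta_M(w_1),\dots,\eta_M(w_t))\in\mathcal R$ satisfy: there exist $t^\star$ and $\hat R$ with $R_t=\hat R$ for all $t\ge t^\star$ and $\mathfrak S(\hat R)$ agrees with $f_M$ on $I_M$. With input-output observations ($\alpha\equiv\varepsilon$, the empty string) and a concept class $\mathcal F\subseteq G_{\mathcal D}$, this is called the $\mathcal F$-learning problem (examples are $(x,f(x))$ for $x\in I\cap D_f$, $D_f$ the domain of $f$). Complexity classes. Let $\mathrm{size}_{\mathcal D}:\mathcal D\to\mathbb N$ be a canonical size measure known to the learner. For $\mathcal M\subseteq\mathcal M_{\mathcal D}$ and computable monotonically increasing $Q:\mathbb N\times\mathbb N\to\mathbb N$, $\mathbf{TIME}^{\mathcal M}_{\mathcal D}(Q(c,n))$ is the set of $f\in\mathcal F_{\mathcal M}$ for which some $M\in\mathcal M$ (not necessarily a Turing machine) computes $f$ on every $x\in D_f$ with $\mathrm{size}_{\mathcal D}(x)=n$ in $O(Q(c,n))$ steps; $\mathbf Q(\mathcal M,\mathcal D)=\bigcup_{c\in\mathbb N}\mathbf{TIME}^{\mathcal M}_{\mathcal D}(Q(c,n))$. Turing machines. Fix a finite problem alphabet $\Sigma$, a blank $\lambda\notin\Sigma$ and a finite tape alphabet $\Gamma\supseteq\Sigma\cup\{\lambda\}$. A TM is $T=(Q,\Gamma,\delta)$ with finite state set $Q$ (containing a start state $q_0$ and halt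 state $q_f$) and $\delta:Q\times\Gamma\to Q\times\Gamma\times\{L,R,S\}$ (write, then move left/right/stay) on a bi-infinite tape; the input $x\in\Sigma^*$ is written on a blank tape with the head on its first symbol; the output $T(x)$ is defined iff at halting the tape contains exactly one contiguous string from $\Sigma^*$, which is the output. $\mathcal T$ denotes this class of TMs, computing the general recursive functions on $\Sigma^*$. $q$-ECTT: for every physically realizable computational model $M$ on $\mathcal D$ there are a constant $c\in\mathbb N$ and a TM $T\in\mathcal T$ such that, for (any natural) computable injective encoding $\varphi:\mathcal D\to\Sigma^*$, whenever $M$'s computation on $x$ takes $t$ steps, $T$ on input $\varphi(x)$ simulates it (producing $\varphi(f_M(x))$) within $q(c,t)$ steps. *)

theory Defs
  imports Main "HOL-Library.Nat_Bijection"
begin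

datatype recf = Zf | Sf | Idf nat | Cnf recf "recf list" | Prf recf recf | Mnf recf

inductive reval :: "recf \<Rightarrow> nat list \<Rightarrow> nat \<Rightarrow> bool" where
  zero: "reval Zf xs 0"
| succ: "reval Sf (x # xs) (Suc x)"
| proj: "i < length xs \<Longrightarrow> reval (Idf i) xs (xs ! i)"
| comp: "length ys = length gs \<Longrightarrow> (\<forall>i < length gs. reval (gs ! i) xs (ys ! i))
          \<Longrightarrow> reval f ys z \<Longrightarrow> reval (Cnf f gs) xs z"
| pr0: "reval f xs y \<Longrightarrow> reval (Prf f g) (0 # xs) y"
| prS: "reval (Prf f g) (n # xs) y \<Longrightarrow> reval g (n # y # xs) z
          \<Longrightarrow> reval (Prf f g) (Suc n # xs) z"
| mu: "reval f (n # xs) 0 \<Longrightarrow> (\<forall>m < n. \<exists>y. reval f (m # xs) y \<and> y \<noteq> 0)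
          \<Longrightarrow> reval (Mnf f) xs n"

definition partial_rec :: "(nat \<Rightarrow> nat option) \<Rightarrow> bool" where
  "partial_rec g \<longleftrightarrow> (\<exists>r. \<forall>x y. reval r [x] y \<longleftrightarrow> g x = Some y)"

definition total_rec :: "(nat \<Rightarrow> nat) \<Rightarrow> bool" where
  "total_rec h \<longleftrightarrow> (\<exists>r. \<forall>x y. reval r [x] y \<longleftrightarrow> y = h x)"

definition total_rec2 :: "(nat \<Rightarrow> nat \<Rightarrow> nat) \<Rightarrow> bool" where
  "total_rec2 h \<longleftrightarrow> total_rec (\<lambda>p. case prod_decode p of (a, b) \<Rightarrow> h a b)"

definition decidable_set :: "nat set \<Rightarrow> bool" where
  "decidable_set A \<longleftrightarrow> total_rec (\<lambda>n. if n \<in> A then 1 else 0)"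

definition mono2 :: "(nat \<Rightarrow> nat \<Rightarrow> nat) \<Rightarrow> bool" where
  "mono2 h \<longleftrightarrow> (\<forall>a b c d. a \<le> c \<longrightarrow> b \<le> d \<longrightarrow> h a b \<le> h c d)"

section \<open>Computational models on the domain (identified with nat via its enumeration)\<close>

record cmodel =
  m_init :: "nat \<Rightarrow> nat"
  m_step :: "nat \<Rightarrow> nat"
  m_halted :: "nat \<Rightarrow> bool"
  m_out :: "nat \<Rightarrow> nat"

definition comp_model :: "cmodel \<Rightarrow> bool" where
  "comp_model M \<longleftrightarrow> total_rec (m_init M) \<and> total_rec (m_step M)
     \<and> total_rec (\<lambda>s. if m_halted M s then 1 else 0) \<and> total_rec (m_out M)"

definition mrun :: "cmodel \<Rightarrow> nat \<Rightarrow> nat \<Rightarrow> nat" where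
  "mrun M x k = (m_step M ^^ k) (m_init M x)"

definition mhalts :: "cmodel \<Rightarrow> nat \<Rightarrow> bool" where
  "mhalts M x \<longleftrightarrow> (\<exists>k. m_halted M (mrun M x k))"

definition mtime :: "cmodel \<Rightarrow> nat \<Rightarrow> nat" where
  "mtime M x = (LEAST k. m_halted M (mrun M x k))"

definition mfun :: "cmodel \<Rightarrow> nat \<Rightarrow> nat option" where
  "mfun M x = (if mhalts M x then Some (m_out M (mrun M x (mtime M x))) else None)"

text \<open>Q(Ms, D) = union over c of TIME^{Ms}(Q(c,n)); O(.) read as
  t_M(x) \<le> K * Q(c, size x) + K for a constant K.\<close>
definition Qclass :: "(nat \<Rightarrow> nat \<Rightarrow> nat) \<Rightarrow> (nat \<Rightarrow> nat) \<Rightarrow> cmodel set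
                      \<Rightarrow> (nat \<Rightarrow> nat option) set" where
  "Qclass Q sz Ms = {f. \<exists>c. \<exists>M\<in>Ms. mfun M = f \<and>
      (\<exists>K. \<forall>x. f x \<noteq> None \<longrightarrow> mtime M x \<le> K * Q c (sz x) + K)}"

datatype dir = Lmv | Rmv | Smv

text \<open>States are 0..<tm_nst; start state 0, halt state 1; tape symbols are nats.\<close>
record tm =
  tm_nst :: nat
  tm_delta :: "nat \<Rightarrow> nat \<Rightarrow> nat \<times> nat \<times> dir"

definition wf_tm :: "nat set \<Rightarrow> tm \<Rightarrow> bool" where
  "wf_tm \<Gamma> T \<longleftrightarrow> 2 \<le> tm_nst T \<and>
     (\<forall>s < tm_nst T. \<forall>a\<in>\<Gamma>. fst (tm_delta T s a) < tm_nst T \<and> fst (snd (tm_delta T s a)) \<in> \<Gamma>)"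

type_synonym tconf = "nat \<times> (int \<Rightarrow> nat) \<times> int"

definition tm_step :: "tm \<Rightarrow> tconf \<Rightarrow> tconf" where
  "tm_step T c = (case c of (s, tp, h) \<Rightarrow>
     if s = 1 then (s, tp, h) else
     (case tm_delta T s (tp h) of (s', a, d) \<Rightarrow>
        (s', tp(h := a), h + (case d of Lmv \<Rightarrow> -1 | Rmv \<Rightarrow> 1 | Smv \<Rightarrow> 0))))"

definition tm_init :: "nat \<Rightarrow> nat list \<Rightarrow> tconf" where
  "tm_init blank xs = (0, \<lambda>i. if 0 \<le> i \<and> i < int (length xs) then xs ! nat i else blank, 0)"

definition tm_tape_output :: "nat set \<Rightarrow> nat \<Rightarrow> (int \<Rightarrow> nat) \<Rightarrow> nat list \<Rightarrow> bool" where
  "tm_tape_output \<Sigma> blank tp ys \<longleftrightarrow> set ys \<subseteq> \<Sigma> \<and>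
     (\<exists>a. \<forall>i. tp i = (if a \<le> i \<and> i < a + int (length ys) then ys ! nat (i - a) else blank))"

definition tm_computes_within :: "nat set \<Rightarrow> nat \<Rightarrow> tm \<Rightarrow> nat list \<Rightarrow> nat list \<Rightarrow> nat \<Rightarrow> bool" where
  "tm_computes_within \<Sigma> blank T xs ys k \<longleftrightarrow>
     (\<exists>j \<le> k. case (tm_step T ^^ j) (tm_init blank xs) of (s, tp, h) \<Rightarrow>
         s = 1 \<and> tm_tape_output \<Sigma> blank tp ys)"

section \<open>q-ECTT (for the class Ms of physically realizable models and the encoding phi)\<close>

definition q_ECTT :: "(nat \<Rightarrow> nat \<Rightarrow> nat) \<Rightarrow> nat set \<Rightarrow> nat set \<Rightarrow> nat \<Rightarrow> (nat \<Rightarrow> nat list)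
                      \<Rightarrow> cmodel set \<Rightarrow> bool" where
  "q_ECTT q \<Sigma> \<Gamma> blank \<phi> Ms \<longleftrightarrow> (\<forall>M\<in>Ms. \<exists>c T. wf_tm \<Gamma> T \<and>
     (\<forall>x. mhalts M x \<longrightarrow>
        tm_computes_within \<Sigma> blank T (\<phi> x) (\<phi> (the (mfun M x))) (q c (mtime M x))))"

definition examples_code :: "(nat \<Rightarrow> nat option) \<Rightarrow> (nat \<Rightarrow> nat) \<Rightarrow> nat \<Rightarrow> nat" where
  "examples_code f w t = list_encode (map (\<lambda>i. prod_encode (w i, the (f (w i)))) [0..<Suc t])"

definition solves_learning :: "(nat \<Rightarrow> nat option) set \<Rightarrow> bool" where
  "solves_learning F \<longleftrightarrow> (\<exists>L R S.
     total_rec L \<and> decidable_set R \<and> (\<forall>n. L n \<in> R) \<and> (\<forall>r\<in>R. partial_rec (S r)) \<and>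
     (\<forall>f\<in>F. \<forall>(I :: nat set) (w :: nat \<Rightarrow> nat).
        (range w = {x \<in> I. f x \<noteq> None}) \<longrightarrow>
        (\<exists>t0 r. \<forall>t \<ge> t0. L (examples_code f w t) = r \<and>
                 (\<forall>x\<in>I. f x \<noteq> None \<longrightarrow> S r x = f x))))"

end

theory Submission
  imports Defs
begin


definition recfn :: "nat \<Rightarrow> (nat list \<Rightarrow> nat) \<Rightarrow> bool" where
  "recfn k g \<longleftrightarrow> (\<exists>r. \<forall>xs. length xs = k \<longrightarrow> (\<forall>y. reval r xs y \<longleftrightarrow> y = g xs))"

inductive_cases Zf_E: "reval Zf xs y"
inductive_cases Sf_E: "reval Sf xs y"
inductive_cases Id_E: "reval (Idf i) xs y"
inductive_cases Cn_E: "reval (Cnf f gs) xs y"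
inductive_cases Pr_E: "reval (Prf f g) xs y"
inductive_cases Mn_E: "reval (Mnf f) xs y"

lemma recfn_cong: "recfn k g \<Longrightarrow> (\<And>xs. length xs = k \<Longrightarrow> g xs = g' xs) \<Longrightarrow> recfn k g'"
  unfolding recfn_def by metis

lemma recfn_zero: "recfn k (\<lambda>_. 0)"
  unfolding recfn_def by (rule exI[of _ Zf]) (auto elim: Zf_E intro: reval.zero)

lemma recfn_proj: "i < k \<Longrightarrow> recfn k (\<lambda>xs. xs ! i)"
  unfolding recfn_def by (rule exI[of _ "Idf i"]) (auto elim: Id_E intro: reval.proj)

lemma recfn_Sf: "recfn 1 (\<lambda>xs. Suc (xs ! 0))"
  unfolding recfn_def
proof (rule exI[of _ Sf], intro allI impI)
  fix xs :: "nat list" and y assume "length xs = 1"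
  then obtain x where "xs = [x]" by (cases xs) auto
  then show "reval Sf xs y \<longleftrightarrow> y = Suc (xs ! 0)" by (auto elim: Sf_E intro: reval.succ)
qed

lemma recfn_comp:
  assumes f: "recfn m f" and len: "length gs = m" and gs: "\<forall>g\<in>set gs. recfn k g"
  shows "recfn k (\<lambda>xs. f (map (\<lambda>g. g xs) gs))"
proof -
  obtain rf where rf: "\<forall>xs. length xs = m \<longrightarrow> (\<forall>y. reval rf xs y \<longleftrightarrow> y = f xs)"
    using f unfolding recfn_def by blast
  have "\<forall>i<m. \<exists>r. \<forall>xs. length xs = k \<longrightarrow> (\<forall>y. reval r xs y \<longleftrightarrow> y = (gs ! i) xs)"
    using gs len unfolding recfn_def by (metis nth_mem)
  then obtain rs where rs: "\<And>i. i < m \<Longrightarrow> \<forall>xs. length xs = k \<longrightarrow> (\<forall>y. reval (rs i) xs y \<longleftrightarrow> y = (gs ! i) xs)"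
    by metis
  show ?thesis unfolding recfn_def
  proof (rule exI[of _ "Cnf rf (map rs [0..<m])"], intro allI impI)
    fix xs :: "nat list" and y assume lx: "length xs = k"
    show "reval (Cnf rf (map rs [0..<m])) xs y \<longleftrightarrow> y = f (map (\<lambda>g. g xs) gs)"
    proof
      assume "reval (Cnf rf (map rs [0..<m])) xs y"
      then obtain ys where 1: "length ys = m" and 2: "\<forall>i<m. reval (rs i) xs (ys ! i)" and 3: "reval rf ys y"
        by (auto elim!: Cn_E)
      have "ys = map (\<lambda>g. g xs) gs"
        using 1 2 rs lx len by (intro nth_equalityI) auto
      then show "y = f (map (\<lambda>g. g xs) gs)" using 3 rf 1 by auto
    next
      assume y: "y = f (map (\<lambda>g. g xs) gs)"
      show "reval (Cnf rf (map rs [0..<m])) xs y"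
        apply (rule reval.comp[where ys="map (\<lambda>g. g xs) gs"])
        using rs lx len rf y by auto
    qed
  qed
qed

lemma recfn_prim:
  assumes f: "recfn k f" and g: "recfn (Suc (Suc k)) g"
  shows "recfn (Suc k) (\<lambda>xs. rec_nat (f (tl xs)) (\<lambda>m y. g (m # y # tl xs)) (hd xs))"
proof -
  obtain rf where rf: "\<forall>xs. length xs = k \<longrightarrow> (\<forall>y. reval rf xs y \<longleftrightarrow> y = f xs)"
    using f unfolding recfn_def by blast
  obtain rg where rg: "\<forall>xs. length xs = Suc (Suc k) \<longrightarrow> (\<forall>y. reval rg xs y \<longleftrightarrow> y = g xs)"
    using g unfolding recfn_def by blast
  have main: "length xs = k \<Longrightarrow> reval (Prf rf rg) (n # xs) y \<longleftrightarrow> y = rec_nat (f xs) (\<lambda>m y. g (m # y # xs)) n"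
    for n xs y
  proof (induction n arbitrary: y)
    case 0
    then show ?case using rf by (auto elim: Pr_E intro: reval.pr0)
  next
    case (Suc n)
    show ?case
    proof
      assume "reval (Prf rf rg) (Suc n # xs) y"
      then obtain y' where "reval (Prf rf rg) (n # xs) y'" "reval rg (n # y' # xs) y"
        by (auto elim: Pr_E)
      then show "y = rec_nat (f xs) (\<lambda>m y. g (m # y # xs)) (Suc n)"
        using Suc rg by auto
    next
      assume "y = rec_nat (f xs) (\<lambda>m y. g (m # y # xs)) (Suc n)"
      then show "reval (Prf rf rg) (Suc n # xs) y"
        using Suc rg by (auto intro: reval.prS)
    qed
  qed
  show ?thesis unfolding recfn_def
  proof (rule exI[of _ "Prf rf rg"], intro allI impI)
    fix xs :: "nat list" and y assume "length xs = Suc k"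
    then obtain n xs' where "xs = n # xs'" "length xs' = k" by (cases xs) auto
    then show "reval (Prf rf rg) xs y \<longleftrightarrow> y = rec_nat (f (tl xs)) (\<lambda>m y. g (m # y # tl xs)) (hd xs)"
      using main by auto
  qed
qed

lemma recfn_mu:
  assumes g: "recfn 2 g"
  shows "partial_rec (\<lambda>x. if \<exists>n. g [n, x] = 0 then Some (LEAST n. g [n, x] = 0) else None)"
proof -
  obtain rg where rg: "\<forall>xs. length xs = 2 \<longrightarrow> (\<forall>y. reval rg xs y \<longleftrightarrow> y = g xs)"
    using g unfolding recfn_def by blast
  show ?thesis unfolding partial_rec_def
  proof (rule exI[of _ "Mnf rg"], intro allI)
    fix x y
    have "reval (Mnf rg) [x] y \<longleftrightarrow> g [y, x] = 0 \<and> (\<forall>m<y. g [m, x] \<noteq> 0)"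
    proof
      assume "reval (Mnf rg) [x] y"
      then have "reval rg [y, x] 0" "\<forall>m<y. \<exists>z. reval rg [m, x] z \<and> z \<noteq> 0" by (auto elim: Mn_E)
      then show "g [y, x] = 0 \<and> (\<forall>m<y. g [m, x] \<noteq> 0)" using rg by fastforce
    next
      assume "g [y, x] = 0 \<and> (\<forall>m<y. g [m, x] \<noteq> 0)"
      then show "reval (Mnf rg) [x] y" using rg by (auto intro!: reval.mu)
    qed
    also have "\<dots> \<longleftrightarrow> (if \<exists>n. g [n, x] = 0 then Some (LEAST n. g [n, x] = 0) else None) = Some y"
    proof
      assume "g [y, x] = 0 \<and> (\<forall>m<y. g [m, x] \<noteq> 0)"
      then have h: "g [y,x] = 0" "\<And>m. m<y \<Longrightarrow> g [m,x] \<noteq> 0" by auto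
      have "(LEAST n. g [n, x] = 0) = y" by (rule Least_equality, fact h(1)) (meson h(2) not_le)
      then show "(if \<exists>n. g [n, x] = 0 then Some (LEAST n. g [n, x] = 0) else None) = Some y"
        using h(1) by auto
    next
      assume "(if \<exists>n. g [n, x] = 0 then Some (LEAST n. g [n, x] = 0) else None) = Some y"
      then show "g [y, x] = 0 \<and> (\<forall>m<y. g [m, x] \<noteq> 0)"
        by (auto split: if_splits dest: not_less_Least intro: LeastI)
    qed
    finally show "reval (Mnf rg) [x] y \<longleftrightarrow> (if \<exists>n. g [n, x] = 0 then Some (LEAST n. g [n, x] = 0) else None) = Some y" .
  qed
qed


lemma tr_iff: "total_rec f \<longleftrightarrow> recfn 1 (\<lambda>xs. f (xs ! 0))"
proof
  assume "total_rec f"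
  then obtain r where r: "\<forall>x y. reval r [x] y \<longleftrightarrow> y = f x" unfolding total_rec_def by blast
  show "recfn 1 (\<lambda>xs. f (xs ! 0))" unfolding recfn_def
  proof (rule exI[of _ r], intro allI impI)
    fix xs :: "nat list" and y assume "length xs = 1"
    then obtain x where "xs = [x]" by (cases xs) auto
    then show "reval r xs y \<longleftrightarrow> y = f (xs ! 0)" using r by auto
  qed
next
  assume "recfn 1 (\<lambda>xs. f (xs ! 0))"
  then obtain r where r: "\<forall>xs. length xs = 1 \<longrightarrow> (\<forall>y. reval r xs y \<longleftrightarrow> y = f (xs ! 0))"
    unfolding recfn_def by blast
  show "total_rec f" unfolding total_rec_def
    by (rule exI[of _ r]) (use r in \<open>auto\<close>)
qed

lemma recfn_app2':
  assumes "recfn 2 h" "recfn k g1" "recfn k g2"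
  shows "recfn k (\<lambda>xs. h [g1 xs, g2 xs])"
  using recfn_comp[OF assms(1), of "[g1, g2]" k] assms by simp

lemma recfn_app1':
  assumes "recfn 1 h" "recfn k g1"
  shows "recfn k (\<lambda>xs. h [g1 xs])"
  using recfn_comp[OF assms(1), of "[g1]" k] assms by simp

lemma recfn_app1:
  assumes "total_rec f" "recfn k g"
  shows "recfn k (\<lambda>xs. f (g xs))"
  using recfn_app1'[OF assms(1)[unfolded tr_iff] assms(2)] by simp

lemma recfn_Suc: "recfn k g \<Longrightarrow> recfn k (\<lambda>xs. Suc (g xs))"
  using recfn_app1'[OF recfn_Sf] by simp

lemma recfn_const: "recfn k (\<lambda>_. c)"
  by (induction c) (auto intro: recfn_zero recfn_Suc[of k "\<lambda>_. _", simplified])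

lemma rn_add: "rec_nat b (\<lambda>m. Suc) a = a + b" by (induction a) auto
lemma rn_mult: "rec_nat 0 (\<lambda>m y. y + b) a = a * b" by (induction a) auto
lemma rn_pred: "rec_nat 0 (\<lambda>m y. m) a = a - Suc 0" by (induction a) auto
lemma rn_sub: "rec_nat b (\<lambda>m y. y - Suc 0) a = b - a" by (induction a) auto
lemma rn_tri: "rec_nat 0 (\<lambda>m y. Suc (y + m)) a = triangle a" by (induction a) auto
lemmas rn_simps = rn_add rn_mult rn_pred rn_sub rn_tri

lemma len2: "length xs = 2 \<Longrightarrow> \<exists>a b. xs = [a, b]"
  by (cases xs; cases "tl xs") auto
lemma len1: "length xs = 1 \<Longrightarrow> \<exists>a. xs = [a]"
  by (cases xs) auto
lemma len3: "length xs = 3 \<Longrightarrow> \<exists>a b c. xs = [a, b, c]"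
  by (cases xs; cases "tl xs"; cases "tl (tl xs)") auto

lemma recfn_congS:
  "recfn (Suc (Suc 0)) g \<Longrightarrow> (\<And>xs. length xs = 2 \<Longrightarrow> g xs = g' xs) \<Longrightarrow> recfn 2 g'"
  "recfn (Suc 0) g \<Longrightarrow> (\<And>xs. length xs = 1 \<Longrightarrow> g xs = g' xs) \<Longrightarrow> recfn 1 g'"
  by (auto simp: numeral_2_eq_2 intro: recfn_cong)

lemma cong_by2: "length xs = 2 \<Longrightarrow> (\<And>a b. g [a, b] = g' [a, b]) \<Longrightarrow> g xs = g' xs"
  using len2 by metis
lemma cong_by1: "length xs = 1 \<Longrightarrow> (\<And>a. g [a] = g' [a]) \<Longrightarrow> g xs = g' xs"
  using len1 by metis

lemma recfn_add0: "recfn 2 (\<lambda>xs. xs ! 0 + xs ! 1)"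
proof -
  have "recfn (Suc (Suc 0)) (\<lambda>xs. rec_nat ((tl xs) ! 0) (\<lambda>m y. Suc ((m # y # tl xs) ! 1)) (hd xs))"
    by (rule recfn_prim[of "Suc 0" "\<lambda>xs. xs ! 0" "\<lambda>xs. Suc (xs ! 1)"]) (auto intro: recfn_proj recfn_Suc)
  then show ?thesis apply (rule recfn_congS) apply (erule cong_by2) by (simp add: rn_simps)
qed

lemma recfn_add: "recfn k g \<Longrightarrow> recfn k h \<Longrightarrow> recfn k (\<lambda>xs. g xs + h xs)"
  using recfn_app2'[OF recfn_add0] by simp

lemma recfn_mult0: "recfn 2 (\<lambda>xs. xs ! 0 * xs ! 1)"
proof -
  have "recfn (Suc (Suc 0)) (\<lambda>xs. rec_nat ((\<lambda>_. 0) (tl xs)) (\<lambda>m y. (m # y # tl xs) ! 1 + (m # y # tl xs) ! 2) (hd xs))"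
    by (rule recfn_prim) (auto intro!: recfn_proj recfn_add recfn_zero)
  then show ?thesis apply (rule recfn_congS) apply (erule cong_by2) by (simp add: rn_simps)
qed

lemma recfn_mult: "recfn k g \<Longrightarrow> recfn k h \<Longrightarrow> recfn k (\<lambda>xs. g xs * h xs)"
  using recfn_app2'[OF recfn_mult0] by simp

lemma recfn_pred0: "recfn 1 (\<lambda>xs. xs ! 0 - 1)"
proof -
  have "recfn (Suc 0) (\<lambda>xs. rec_nat ((\<lambda>_. 0) (tl xs)) (\<lambda>m y. (m # y # tl xs) ! 0) (hd xs))"
    by (rule recfn_prim) (auto intro: recfn_proj recfn_zero)
  then show ?thesis apply (rule recfn_congS) apply (erule cong_by1) by (simp add: rn_simps)
qed

lemma recfn_sub0: "recfn 2 (\<lambda>xs. xs ! 1 - xs ! 0)"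
proof -
  have "recfn (Suc (Suc 0)) (\<lambda>xs. rec_nat ((tl xs) ! 0) (\<lambda>m y. (m # y # tl xs) ! 1 - 1) (hd xs))"
    by (rule recfn_prim[of "Suc 0" "\<lambda>xs. xs ! 0" "\<lambda>xs. xs ! 1 - 1"])
      (auto intro: recfn_proj recfn_app1'[OF recfn_pred0, of _ "\<lambda>xs. xs ! 1", simplified])
  then show ?thesis apply (rule recfn_congS) apply (erule cong_by2) by (simp add: rn_simps)
qed

lemma recfn_sub: "recfn k g \<Longrightarrow> recfn k h \<Longrightarrow> recfn k (\<lambda>xs. g xs - h xs)"
  using recfn_app2'[OF recfn_sub0, of k h g] by simp

lemma recfn_tri0: "recfn 1 (\<lambda>xs. triangle (xs ! 0))"
proof -
  have "recfn (Suc 0) (\<lambda>xs. rec_nat ((\<lambda>_. 0) (tl xs)) (\<lambda>m y. (m # y # tl xs) ! 1 + Suc ((m # y # tl xs) ! 0)) (hd xs))"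
    by (rule recfn_prim) (auto intro!: recfn_proj recfn_zero recfn_add recfn_Suc)
  then show ?thesis apply (rule recfn_congS) apply (erule cong_by1) by (simp add: rn_simps)
qed

lemma recfn_tri: "recfn k g \<Longrightarrow> recfn k (\<lambda>xs. triangle (g xs))"
  using recfn_app1'[OF recfn_tri0] by simp

lemma recfn_penc: "recfn k g \<Longrightarrow> recfn k h \<Longrightarrow> recfn k (\<lambda>xs. prod_encode (g xs, h xs))"
  unfolding prod_encode_def by (simp add: recfn_add recfn_tri)

definition pf :: "nat \<Rightarrow> nat" where "pf p = fst (prod_decode p)"
definition ps :: "nat \<Rightarrow> nat" where "ps p = snd (prod_decode p)"
abbreviation pr :: "nat \<Rightarrow> nat \<Rightarrow> nat" where "pr a b \<equiv> prod_encode (a, b)"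

lemma pf_pr[simp]: "pf (pr a b) = a" by (simp add: pf_def)
lemma ps_pr[simp]: "ps (pr a b) = b" by (simp add: ps_def)
lemma pr_pfps[simp]: "pr (pf p) (ps p) = p" by (simp add: pf_def ps_def)

definition cnt :: "nat \<Rightarrow> nat \<Rightarrow> nat" where
  "cnt n p = rec_nat 0 (\<lambda>m y. y + (1 - (triangle (Suc m) - p))) n"

lemma tri_mono: "a \<le> b \<Longrightarrow> triangle a \<le> triangle b"
  by (induction b) (auto simp: le_Suc_eq)

lemma decode_tri:
  "triangle (pf p + ps p) \<le> p \<and> p < triangle (Suc (pf p + ps p))"
proof -
  have "pr (pf p) (ps p) = p" by simp
  then have "triangle (pf p + ps p) + pf p = p" unfolding prod_encode_def by simp
  then show ?thesis by simp
qed

lemma cnt_eq: "cnt n p = min n (pf p + ps p)"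
proof (induction n)
  case 0 then show ?case unfolding cnt_def by simp
next
  case (Suc n)
  let ?s = "pf p + ps p"
  have "triangle (Suc n) \<le> p \<longleftrightarrow> Suc n \<le> ?s"
  proof
    assume a: "triangle (Suc n) \<le> p"
    show "Suc n \<le> ?s"
    proof (rule ccontr)
      assume "\<not> Suc n \<le> ?s"
      then have "Suc ?s \<le> Suc n" by simp
      then have "triangle (Suc ?s) \<le> triangle (Suc n)" by (rule tri_mono)
      moreover have "p < triangle (Suc ?s)" using decode_tri[of p] by blast
      ultimately show False using a by linarith
    qed
  next
    assume "Suc n \<le> ?s"
    then have "triangle (Suc n) \<le> triangle ?s" by (rule tri_mono)
    moreover have "triangle ?s \<le> p" using decode_tri[of p] by blast
    ultimately show "triangle (Suc n) \<le> p" by linarith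
  qed
  then show ?case using Suc by (auto simp: cnt_def)
qed

lemma tri_ge: "n \<le> triangle n" by (induction n) auto

lemma cnt_pp: "cnt p p = pf p + ps p"
  using cnt_eq[of p p] decode_tri[of p] tri_ge[of "pf p + ps p"] by simp

lemma recfn_cnt0: "recfn 2 (\<lambda>xs. cnt (xs ! 0) (xs ! 1))"
proof -
  have "recfn (Suc (Suc 0)) (\<lambda>xs. rec_nat ((\<lambda>_. 0) (tl xs)) (\<lambda>m y. (m # y # tl xs) ! 1 + (1 - (triangle (Suc ((m # y # tl xs) ! 0)) - (m # y # tl xs) ! 2))) (hd xs))"
    by (rule recfn_prim) (auto intro!: recfn_proj recfn_zero recfn_add recfn_Suc recfn_sub recfn_tri recfn_const)
  then show ?thesis apply (rule recfn_congS) apply (erule cong_by2) by (simp add: cnt_def)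
qed

lemma pf_eq: "pf p = p - triangle (cnt p p)"
proof -
  have "pr (pf p) (ps p) = p" by simp
  then have e: "triangle (pf p + ps p) + pf p = p" by (simp add: prod_encode_def)
  then have "p - triangle (pf p + ps p) = pf p" by linarith
  then show ?thesis by (simp add: cnt_pp)
qed

lemma ps_eq: "ps p = cnt p p - pf p"
  by (simp add: cnt_pp)

lemma recfn_cntpp: "recfn 1 (\<lambda>xs. cnt (xs ! 0) (xs ! 0))"
  using recfn_app2'[OF recfn_cnt0, of 1 "\<lambda>xs. xs ! 0" "\<lambda>xs. xs ! 0"] recfn_proj[of 0 1] by simp

lemma recfn_pf0: "recfn 1 (\<lambda>xs. pf (xs ! 0))"
proof -
  have "recfn 1 (\<lambda>xs. xs ! 0 - triangle (cnt (xs ! 0) (xs ! 0)))"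
    by (rule recfn_sub[OF recfn_proj recfn_tri[OF recfn_cntpp]]) simp
  then show ?thesis by (rule recfn_cong) (rule pf_eq[symmetric])
qed

lemma recfn_ps0: "recfn 1 (\<lambda>xs. ps (xs ! 0))"
proof -
  have "recfn 1 (\<lambda>xs. cnt (xs ! 0) (xs ! 0) - pf (xs ! 0))"
    by (rule recfn_sub[OF recfn_cntpp recfn_pf0])
  then show ?thesis by (rule recfn_cong) (rule ps_eq[symmetric])
qed


lemma T_cong: "total_rec f \<Longrightarrow> (\<And>x. f x = g x) \<Longrightarrow> total_rec g"
  by (metis ext)

lemma T_id: "total_rec (\<lambda>x. x)"
  unfolding tr_iff by (rule recfn_proj) simp

lemma T_const: "total_rec (\<lambda>x. c)"
  unfolding tr_iff by (rule recfn_const)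

lemma T_lift: "total_rec g \<Longrightarrow> recfn 1 (\<lambda>xs. g (xs ! 0))" by (simp add: tr_iff)

lemma T_add: "total_rec g \<Longrightarrow> total_rec h \<Longrightarrow> total_rec (\<lambda>x. g x + h x)"
  unfolding tr_iff by (rule recfn_add)
lemma T_sub: "total_rec g \<Longrightarrow> total_rec h \<Longrightarrow> total_rec (\<lambda>x. g x - h x)"
  unfolding tr_iff by (rule recfn_sub)
lemma T_mult: "total_rec g \<Longrightarrow> total_rec h \<Longrightarrow> total_rec (\<lambda>x. g x * h x)"
  unfolding tr_iff by (rule recfn_mult)
lemma T_Suc: "total_rec g \<Longrightarrow> total_rec (\<lambda>x. Suc (g x))"
  unfolding tr_iff by (rule recfn_Suc)
lemma T_pr: "total_rec g \<Longrightarrow> total_rec h \<Longrightarrow> total_rec (\<lambda>x. pr (g x) (h x))"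
  unfolding tr_iff by (rule recfn_penc)
lemma T_pf: "total_rec g \<Longrightarrow> total_rec (\<lambda>x. pf (g x))"
  unfolding tr_iff using recfn_app1'[OF recfn_pf0] by simp
lemma T_ps: "total_rec g \<Longrightarrow> total_rec (\<lambda>x. ps (g x))"
  unfolding tr_iff using recfn_app1'[OF recfn_ps0] by simp

lemma T_comp: "total_rec f \<Longrightarrow> total_rec g \<Longrightarrow> total_rec (\<lambda>x. f (g x))"
  unfolding tr_iff using recfn_app1 by (simp add: tr_iff)

lemma T_rec2: "total_rec2 f \<Longrightarrow> total_rec g \<Longrightarrow> total_rec h \<Longrightarrow> total_rec (\<lambda>x. f (g x) (h x))"
proof -
  assume f: "total_rec2 f" and g: "total_rec g" and h: "total_rec h"
  have "total_rec (\<lambda>x. (\<lambda>p. case prod_decode p of (a, b) \<Rightarrow> f a b) (pr (g x) (h x)))"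
    by (rule T_comp[OF f[unfolded total_rec2_def] T_pr[OF g h]])
  then show ?thesis by simp
qed

lemma rn_iter: "rec_nat s (\<lambda>m. F) n = (F ^^ n) s" by (induction n) auto

lemma T_iter: "total_rec F \<Longrightarrow> total_rec n \<Longrightarrow> total_rec s \<Longrightarrow> total_rec (\<lambda>x. (F ^^ n x) (s x))"
proof -
  assume F: "total_rec F" and n: "total_rec n" and s: "total_rec s"
  have "recfn (Suc (Suc 0)) (\<lambda>xs. rec_nat ((tl xs) ! 0) (\<lambda>m y. F ((m # y # tl xs) ! 1)) (hd xs))"
    by (rule recfn_prim[of "Suc 0" "\<lambda>xs. xs ! 0" "\<lambda>xs. F (xs ! 1)"])
      (auto intro: recfn_proj recfn_app1[OF F])
  then have "recfn 2 (\<lambda>xs. (F ^^ (xs ! 0)) (xs ! 1))"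
    apply (rule recfn_congS) apply (erule cong_by2) by (simp add: rn_iter)
  from recfn_app2'[OF this T_lift[OF n] T_lift[OF s]] show ?thesis by (simp add: tr_iff)
qed

definition recP :: "(nat \<Rightarrow> bool) \<Rightarrow> bool" where
  "recP P \<longleftrightarrow> total_rec (\<lambda>x. if P x then 1 else 0)"

lemma T_if: "recP P \<Longrightarrow> total_rec g \<Longrightarrow> total_rec h \<Longrightarrow> total_rec (\<lambda>x. if P x then g x else h x)"
proof -
  assume P: "recP P" and g: "total_rec g" and h: "total_rec h"
  have A: "total_rec (\<lambda>x. (if P x then 1 else 0) * g x)" using P g unfolding recP_def by (rule T_mult)
  have B: "total_rec (\<lambda>x. (1 - (if P x then 1 else 0)) * h x)"
    using T_sub[OF T_const P[unfolded recP_def]] h by (rule T_mult)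
  show ?thesis by (rule T_cong[OF T_add[OF A B]]) auto
qed

lemma P_eq: "total_rec g \<Longrightarrow> total_rec h \<Longrightarrow> recP (\<lambda>x. g x = h x)"
  unfolding recP_def
  by (rule T_cong[OF T_sub[OF T_const[of 1] T_add[OF T_sub[of g h] T_sub[of h g]]]]) auto

lemma P_le: "total_rec g \<Longrightarrow> total_rec h \<Longrightarrow> recP (\<lambda>x. g x \<le> h x)"
  unfolding recP_def
  by (rule T_cong[OF T_sub[OF T_const[of 1] T_sub[of g h]]]) auto

lemma P_less: "total_rec g \<Longrightarrow> total_rec h \<Longrightarrow> recP (\<lambda>x. g x < h x)"
  unfolding recP_def
  by (rule T_cong[OF T_sub[OF T_const[of 1] T_sub[OF T_Suc[of g], of h]]]) auto

lemma P_and: "recP P \<Longrightarrow> recP R \<Longrightarrow> recP (\<lambda>x. P x \<and> R x)"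
  unfolding recP_def
  by (rule T_cong[OF T_mult[of "\<lambda>x. if P x then 1 else 0" "\<lambda>x. if R x then 1 else 0"]]) auto

lemma P_not: "recP P \<Longrightarrow> recP (\<lambda>x. \<not> P x)"
  unfolding recP_def by (rule T_cong[OF T_sub[OF T_const[of 1]]]) auto

lemma P_or: "recP P \<Longrightarrow> recP R \<Longrightarrow> recP (\<lambda>x. P x \<or> R x)"
  using P_not[OF P_and[OF P_not P_not]] by simp

lemmas T_rules = T_id T_const T_add T_sub T_mult T_Suc T_pr T_pf T_ps T_if T_iter
  P_eq P_le P_less P_and P_not P_or

definition DM :: "nat \<Rightarrow> nat \<Rightarrow> nat" where
  "DM B = (\<lambda>st. if Suc (ps st) = B then pr (Suc (pf st)) 0 else pr (pf st) (Suc (ps st)))"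

lemma DM_iter: "0 < B \<Longrightarrow> (DM B ^^ n) (pr 0 0) = pr (n div B) (n mod B)"
  by (induction n) (auto simp: DM_def div_Suc mod_Suc)

lemma T_DM: "total_rec (DM B)"
  unfolding DM_def by (intro T_rules)

lemma T_div: "0 < B \<Longrightarrow> total_rec g \<Longrightarrow> total_rec (\<lambda>x. g x div B)"
  by (rule T_cong[of "\<lambda>x. pf ((DM B ^^ g x) (pr 0 0))"]) (intro T_rules T_DM, auto simp: DM_iter)

lemma T_mod: "0 < B \<Longrightarrow> total_rec g \<Longrightarrow> total_rec (\<lambda>x. g x mod B)"
  by (rule T_cong[of "\<lambda>x. ps ((DM B ^^ g x) (pr 0 0))"]) (intro T_rules T_DM, auto simp: DM_iter)


definition cd :: "nat \<Rightarrow> nat \<Rightarrow> nat" where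
  "cd bl a = (if a = bl then 0 else if a = 0 then bl else a)"

lemma T_cd: assumes "total_rec g" shows "total_rec (\<lambda>x. cd bl (g x))"
  unfolding cd_def by (intro T_rules assms)

definition nthc :: "nat \<Rightarrow> nat \<Rightarrow> nat" where
  "nthc i l = pf ((((\<lambda>l. ps (l - 1)) ^^ i) l) - 1)"

lemma T_nthc: assumes "total_rec g" "total_rec h" shows "total_rec (\<lambda>x. nthc (g x) (h x))"
  unfolding nthc_def by (intro T_rules assms)

definition EN :: "nat \<Rightarrow> nat \<Rightarrow> nat \<Rightarrow> nat" where
  "EN B bl = (\<lambda>st. if pf st = 0 then st else
     pr (ps (pf st - 1)) (pr (pf (ps st) + cd bl (pf (pf st - 1)) * ps (ps st)) (ps (ps st) * B)))"

lemma T_EN: "total_rec (EN B bl)"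
  unfolding EN_def by (intro T_rules T_cd)

definition encc :: "nat \<Rightarrow> nat \<Rightarrow> nat \<Rightarrow> nat" where
  "encc B bl l = pf (ps ((EN B bl ^^ l) (pr l (pr 0 1))))"

lemma T_encc: assumes "total_rec g" shows "total_rec (\<lambda>x. encc B bl (g x))"
  unfolding encc_def by (intro T_rules T_EN assms)

definition ST :: "nat \<Rightarrow> nat \<Rightarrow> nat" where
  "ST B = (\<lambda>st. if pf (ps st) = 1 then st else
     if ps (ps (nthc (pf (ps st) * B + pf (ps (ps (ps st)))) (pf st))) = 0 then pr (pf st) (pr (pf (nthc (pf (ps st) * B + pf (ps (ps (ps st)))) (pf st))) (pr (pf (ps (ps st)) div B) (pr (pf (ps (ps st)) mod B) (ps (ps (ps (ps st))) * B + pf (ps (nthc (pf (ps st) * B + pf (ps (ps (ps st)))) (pf st)))))))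
     else if ps (ps (nthc (pf (ps st) * B + pf (ps (ps (ps st)))) (pf st))) = 1 then pr (pf st) (pr (pf (nthc (pf (ps st) * B + pf (ps (ps (ps st)))) (pf st))) (pr (pf (ps (ps st)) * B + pf (ps (nthc (pf (ps st) * B + pf (ps (ps (ps st)))) (pf st)))) (pr (ps (ps (ps (ps st))) mod B) (ps (ps (ps (ps st))) div B))))
     else pr (pf st) (pr (pf (nthc (pf (ps st) * B + pf (ps (ps (ps st)))) (pf st))) (pr (pf (ps (ps st))) (pr (pf (ps (nthc (pf (ps st) * B + pf (ps (ps (ps st)))) (pf st)))) (ps (ps (ps (ps st))))))))"

lemma T_ST: assumes "0 < B" shows "total_rec (ST B)"
  unfolding ST_def by (intro T_rules T_nthc T_div T_mod assms)

definition MVL :: "nat \<Rightarrow> nat \<Rightarrow> nat" where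
  "MVL B = (\<lambda>st. pr (pf st div B) (pr (pf st mod B) (ps (ps st) * B + pf (ps st))))"

lemma T_MVL: assumes "0 < B" shows "total_rec (MVL B)"
  unfolding MVL_def by (intro T_rules T_div T_mod assms)

definition STP :: "nat \<Rightarrow> nat \<Rightarrow> nat" where
  "STP B = (\<lambda>n. if n \<noteq> 0 \<and> n mod B = 0 then n div B else n)"

lemma T_STP: assumes "0 < B" shows "total_rec (STP B)"
  unfolding STP_def by (intro T_rules T_div T_mod assms)

definition normN :: "nat \<Rightarrow> nat \<Rightarrow> nat" where
  "normN B c = pf (ps ((MVL B ^^ pf c) c)) + B * ps (ps ((MVL B ^^ pf c) c))"

lemma T_normN: assumes "0 < B" "total_rec g" shows "total_rec (\<lambda>x. normN B (g x))"
  unfolding normN_def by (intro T_rules T_MVL assms)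

definition outc :: "nat \<Rightarrow> nat \<Rightarrow> nat" where
  "outc B c = (STP B ^^ normN B c) (normN B c)"

lemma T_outc: assumes "0 < B" "total_rec g" shows "total_rec (\<lambda>x. outc B (g x))"
  unfolding outc_def by (intro T_rules T_STP T_normN assms)

locale simloc =
  fixes B bl :: nat and q Q :: "nat \<Rightarrow> nat \<Rightarrow> nat" and sz phic :: "nat \<Rightarrow> nat"
  assumes B2: "2 \<le> B" and rq: "total_rec2 q" and rQ: "total_rec2 Q"
    and rsz: "total_rec sz" and rphic: "total_rec phic"
begin

lemma B0: "0 < B" using B2 by simp

definition kb :: "nat \<Rightarrow> nat \<Rightarrow> nat" where
  "kb r x = q (pf (ps r)) (ps (ps (ps r)) * Q (pf (ps (ps r))) (sz x) + ps (ps (ps r)))"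

lemma T_kb: assumes "total_rec g" "total_rec h" shows "total_rec (\<lambda>x. kb (g x) (h x))"
  unfolding kb_def by (intro T_rules T_rec2[OF rq] T_rec2[OF rQ] T_comp[OF rsz] assms)

definition initc :: "nat \<Rightarrow> nat" where
  "initc x = pr 0 (pr 0 (pr (encc B bl (phic x) mod B) (encc B bl (phic x) div B)))"

lemma T_initc: assumes "total_rec g" shows "total_rec (\<lambda>x. initc (g x))"
  unfolding initc_def by (intro T_rules T_div T_mod T_encc T_comp[OF rphic] B0 assms)

definition fin :: "nat \<Rightarrow> nat \<Rightarrow> nat" where
  "fin r x = ps ((ST B ^^ kb r x) (pr (pf r) (initc x)))"

lemma T_fin: assumes "total_rec g" "total_rec h" shows "total_rec (\<lambda>x. fin (g x) (h x))"
  unfolding fin_def by (intro T_rules T_ST T_kb T_initc B0 assms)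

definition Cons :: "nat \<Rightarrow> nat \<Rightarrow> nat \<Rightarrow> bool" where
  "Cons r x y \<longleftrightarrow> pf (fin r x) = 1 \<and> outc B (ps (fin r x)) = encc B bl (phic y)"

lemma P_Cons: assumes "total_rec g" "total_rec h" "total_rec k"
  shows "recP (\<lambda>x. Cons (g x) (h x) (k x))"
  unfolding Cons_def by (intro T_rules T_fin T_outc T_encc T_comp[OF rphic] B0 assms)

definition AllStep :: "nat \<Rightarrow> nat" where
  "AllStep = (\<lambda>st. if pf (ps st) = 0 then st else
     pr (pf st) (pr (ps (pf (ps st) - 1))
       (ps (ps st) * (if Cons (pf st) (pf (pf (pf (ps st) - 1))) (ps (pf (pf (ps st) - 1))) then 1 else 0))))"

lemma T_AllStep: "total_rec AllStep"
  unfolding AllStep_def by (intro T_rules P_Cons)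

definition AllOk :: "nat \<Rightarrow> nat \<Rightarrow> nat" where
  "AllOk r d = ps (ps ((AllStep ^^ d) (pr r (pr d 1))))"

lemma T_AllOk: assumes "total_rec g" "total_rec h" shows "total_rec (\<lambda>x. AllOk (g x) (h x))"
  unfolding AllOk_def by (intro T_rules T_AllStep assms)

definition BM :: "nat \<Rightarrow> nat" where
  "BM = (\<lambda>st. pr (pf st) (pr (Suc (pf (ps st)))
      (if ps (ps st) = Suc (pf st) \<and> AllOk (pf (ps st)) (pf st) = 1 then pf (ps st) else ps (ps st))))"

lemma T_BM: "total_rec BM"
  unfolding BM_def by (intro T_rules T_AllOk)

definition Lrn :: "nat \<Rightarrow> nat" where
  "Lrn d = ps (ps ((BM ^^ Suc d) (pr d (pr 0 (Suc d)))))"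

lemma T_Lrn: "total_rec Lrn"
  unfolding Lrn_def by (intro T_rules T_BM)

definition Sfun :: "nat \<Rightarrow> nat \<Rightarrow> nat option" where
  "Sfun r x = (if \<exists>y. Cons r x y then Some (LEAST y. Cons r x y) else None)"

lemma partial_Sfun: "partial_rec (Sfun r)"
proof -
  have t: "total_rec (\<lambda>z. if Cons (pf z) (pf (ps z)) (ps (ps z)) then 1 else 0)"
    using P_Cons[OF T_pf[OF T_id] T_pf[OF T_ps[OF T_id]] T_ps[OF T_ps[OF T_id]]] unfolding recP_def .
  have "recfn 2 (\<lambda>xs. pr r (pr (xs ! 1) (xs ! 0)))"
    by (intro recfn_penc recfn_const recfn_proj) auto
  from recfn_app1[OF t this]
  have rf: "recfn 2 (\<lambda>xs. 1 - (if Cons r (xs ! 1) (xs ! 0) then 1 else 0))"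
    by (intro recfn_sub recfn_const) simp
  have eq: "\<And>n x. (1 - (if Cons r ([n, x] ! 1) ([n, x] ! 0) then 1 else 0) = (0::nat)) \<longleftrightarrow> Cons r x n"
    by simp
  from recfn_mu[OF rf] have "partial_rec (\<lambda>x. if \<exists>n. Cons r x n then Some (LEAST n. Cons r x n) else None)"
    by (simp only: eq)
  then show ?thesis unfolding Sfun_def .
qed

end


lemma cd_cd[simp]: "cd bl (cd bl a) = a" unfolding cd_def by auto
lemma cd_0_iff: "cd bl a = 0 \<longleftrightarrow> a = bl" unfolding cd_def by auto
lemma cd_bl[simp]: "cd bl bl = 0" unfolding cd_def by auto

lemma len_le_le: "length xs \<le> list_encode xs"
proof (induction xs)
  case (Cons x xs) then show ?case using le_prod_encode_2[of "list_encode xs" x] by simp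
qed simp

lemma funpow_fix: "f s = s \<Longrightarrow> (f ^^ n) s = s"
  by (induction n) auto

fun encv :: "nat \<Rightarrow> nat \<Rightarrow> nat list \<Rightarrow> nat" where
  "encv B bl [] = 0"
| "encv B bl (x # xs) = cd bl x + B * encv B bl xs"

lemma EN_iter: "length xs \<le> n \<Longrightarrow>
  (EN B bl ^^ n) (pr (list_encode xs) (pr acc m)) = pr 0 (pr (acc + m * encv B bl xs) (m * B ^ length xs))"
proof (induction xs arbitrary: n acc m)
  case Nil
  have "EN B bl (pr 0 (pr acc m)) = pr 0 (pr acc m)" by (simp add: EN_def)
  then show ?case by (simp add: funpow_fix)
next
  case (Cons x xs)
  then obtain n' where n: "n = Suc n'" "length xs \<le> n'" by (cases n) auto
  have "EN B bl (pr (list_encode (x # xs)) (pr acc m)) = pr (list_encode xs) (pr (acc + cd bl x * m) (m * B))"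
    by (simp add: EN_def)
  then show ?case using Cons.IH[OF n(2)] n(1)
    by (simp only: funpow_Suc_right comp_def) (simp add: algebra_simps)
qed

lemma encc_eq: "encc B bl (list_encode xs) = encv B bl xs"
  unfolding encc_def using EN_iter[OF len_le_le, of xs B bl 0 1] by simp

lemma nthc_eq: "i < length xs \<Longrightarrow> nthc i (list_encode xs) = xs ! i"
proof (induction xs arbitrary: i)
  case (Cons x xs)
  show ?case
  proof (cases i)
    case 0 then show ?thesis by (simp add: nthc_def)
  next
    case (Suc j)
    then have "nthc i (list_encode (x # xs)) = nthc j (list_encode xs)"
      unfolding nthc_def by (simp only: funpow_Suc_right comp_def) simp
    then show ?thesis using Cons Suc by simp
  qed
qed simp

definition dg :: "nat \<Rightarrow> nat \<Rightarrow> nat \<Rightarrow> nat" where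
  "dg B k n = n div B ^ k mod B"

lemma dg_0: "dg B 0 n = n mod B" by (simp add: dg_def)
lemma dg_Suc: "dg B (Suc k) n = dg B k (n div B)"
  by (simp add: dg_def div_mult2_eq)

lemma dg_push0: "0 < B \<Longrightarrow> c < B \<Longrightarrow> dg B 0 (n * B + c) = c" by (simp add: dg_0)
lemma dg_pushS: "0 < B \<Longrightarrow> c < B \<Longrightarrow> dg B (Suc k) (n * B + c) = dg B k n" by (simp add: dg_Suc)
lemma dg_zero[simp]: "dg B k 0 = 0" by (simp add: dg_def)

lemma dg_ext: assumes "2 \<le> B" "\<And>k. dg B k m = dg B k n" shows "m = n"
  using assms(2)
proof (induction "m + n" arbitrary: m n rule: less_induct)
  case less
  show ?case
  proof (cases "m + n = 0")
    case True then show ?thesis by simp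
  next
    case False
    have lt: "m div B + n div B < m + n"
    proof -
      have "m div B \<le> m" "n div B \<le> n" by auto
      moreover have "m div B < m \<or> n div B < n" using False assms(1)
        by (metis add_is_0 div_less_dividend le_neq_implies_less less_le_trans nat_neq_iff one_less_numeral_iff semiring_norm(76) zero_less_iff_neq_zero)
      ultimately show ?thesis by linarith
    qed
    have "\<And>k. dg B k (m div B) = dg B k (n div B)" using less.prems by (metis dg_Suc)
    then have d: "m div B = n div B" using less.hyps[OF lt] by blast
    have "m mod B = n mod B" using less.prems[of 0] by (simp add: dg_0)
    then show ?thesis using d by (metis div_mult_mod_eq)
  qed
qed

lemma dg_pow: "0 < B \<Longrightarrow> dg B k (B ^ p * E) = (if k < p then 0 else dg B (k - p) E)"
proof (induction p arbitrary: k)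
  case 0 then show ?case by simp
next
  case (Suc p)
  have e: "B ^ Suc p * E = (B ^ p * E) * B + 0" by (simp add: algebra_simps)
  show ?case
  proof (cases k)
    case 0 then show ?thesis using Suc.prems by (simp only: e dg_push0) simp
  next
    case (Suc j) then show ?thesis using Suc.prems Suc.IH[of j] by (simp only: e dg_pushS) simp
  qed
qed

lemma dg_encv: "0 < B \<Longrightarrow> \<forall>x\<in>set xs. cd bl x < B \<Longrightarrow>
  dg B k (encv B bl xs) = (if k < length xs then cd bl (xs ! k) else 0)"
proof (induction xs arbitrary: k)
  case Nil then show ?case by simp
next
  case (Cons x xs)
  show ?case
  proof (cases k)
    case 0 then show ?thesis using Cons.prems by (simp add: dg_0)
  next
    case (Suc j) then show ?thesis using Cons.prems Cons.IH[of j] by (simp add: dg_Suc)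
  qed
qed

lemma STP_iter: assumes "E mod B \<noteq> 0" "0 < B" shows "(STP B ^^ j) (B ^ p * E) = B ^ (p - j) * E"
proof (induction j arbitrary: p)
  case 0 then show ?case by simp
next
  case (Suc j)
  have E0: "E \<noteq> 0" using assms by (metis mod_0)
  have B0: "B \<noteq> 0" using assms by simp
  show ?case
  proof (cases p)
    case 0
    then have "STP B (B ^ p * E) = B ^ p * E" using assms by (simp add: STP_def)
    then show ?thesis using Suc.IH[of p] 0 by (simp only: funpow_Suc_right comp_def) simp
  next
    case (Suc p')
    then have "STP B (B ^ p * E) = B ^ p' * E" using E0 B0 by (simp add: STP_def)
    then show ?thesis using Suc.IH[of p'] Suc by (simp only: funpow_Suc_right comp_def) simp
  qed
qed

lemma pow_ge: assumes "2 \<le> B" shows "p < B ^ p"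
proof -
  have "p < 2 ^ p" by (rule less_exp)
  moreover have "(2::nat) ^ p \<le> B ^ p" by (rule power_mono) (use assms in auto)
  ultimately show ?thesis by linarith
qed


fun dcode :: "dir \<Rightarrow> nat" where
  "dcode Lmv = 0" | "dcode Rmv = 1" | "dcode Smv = 2"

definition ent :: "tm \<Rightarrow> nat \<Rightarrow> nat \<Rightarrow> nat \<Rightarrow> nat" where
  "ent T bl s d = (case tm_delta T s (cd bl d) of (s', a', dd) \<Rightarrow> pr s' (pr (cd bl a') (dcode dd)))"

definition tabT :: "nat \<Rightarrow> nat \<Rightarrow> tm \<Rightarrow> nat" where
  "tabT B bl T = list_encode (map (\<lambda>i. ent T bl (i div B) (i mod B)) [0..<tm_nst T * B])"

definition rel3 :: "nat \<Rightarrow> nat \<Rightarrow> (int \<Rightarrow> nat) \<Rightarrow> int \<Rightarrow> nat \<Rightarrow> bool" where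
  "rel3 B bl tp h c \<longleftrightarrow> (\<exists>l a r. c = pr l (pr a r) \<and> a = cd bl (tp h) \<and>
     (\<forall>k. dg B k l = cd bl (tp (h - 1 - int k))) \<and> (\<forall>k. dg B k r = cd bl (tp (h + 1 + int k))))"

definition relc :: "nat \<Rightarrow> nat \<Rightarrow> tconf \<Rightarrow> nat \<Rightarrow> bool" where
  "relc B bl C c \<longleftrightarrow> (case C of (s, tp, h) \<Rightarrow> \<exists>c3. c = pr s c3 \<and> rel3 B bl tp h c3)"

definition invc :: "nat set \<Rightarrow> tm \<Rightarrow> tconf \<Rightarrow> bool" where
  "invc \<Gamma> T C \<longleftrightarrow> (case C of (s, tp, h) \<Rightarrow> s < tm_nst T \<and> (\<forall>i. tp i \<in> \<Gamma>))"

context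
  fixes \<Gamma> :: "nat set" and bl B :: nat and T :: tm
  assumes wf: "wf_tm \<Gamma> T" and blG: "bl \<in> \<Gamma>" and cdB: "\<forall>a\<in>\<Gamma>. cd bl a < B" and B2: "2 \<le> B"
begin

lemma B0': "0 < B" using B2 by simp

lemma lookup: assumes "s < tm_nst T" "d < B"
  shows "nthc (s * B + d) (tabT B bl T) = ent T bl s d"
proof -
  have i: "s * B + d < tm_nst T * B"
  proof -
    have "s * B + d < s * B + B" using assms by simp
    also have "\<dots> = Suc s * B" by simp
    also have "\<dots> \<le> tm_nst T * B" using assms(1) by (intro mult_right_mono) auto
    finally show ?thesis .
  qed
  have dv: "(s * B + d) div B = s" "(s * B + d) mod B = d" using assms B0' by auto
  show ?thesis unfolding tabT_def using i assms(2) by (simp add: nthc_eq dv)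
qed

lemma step_ok:
  assumes inv: "invc \<Gamma> T C" and rel: "relc B bl C c"
  shows "\<exists>c'. ST B (pr (tabT B bl T) c) = pr (tabT B bl T) c' \<and>
      invc \<Gamma> T (tm_step T C) \<and> relc B bl (tm_step T C) c'"
proof -
  obtain s tp h where C: "C = (s, tp, h)" by (cases C) auto
  from rel obtain l a r where c: "c = pr s (pr l (pr a r))" and a: "a = cd bl (tp h)"
    and L: "\<forall>k. dg B k l = cd bl (tp (h - 1 - int k))" and R: "\<forall>k. dg B k r = cd bl (tp (h + 1 + int k))"
    unfolding relc_def rel3_def C by auto
  from inv have sn: "s < tm_nst T" and tpG: "\<forall>i. tp i \<in> \<Gamma>" unfolding invc_def C by auto
  let ?tab = "tabT B bl T"
  show ?thesis
  proof (cases "s = 1")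
    case True
    then have "ST B (pr ?tab c) = pr ?tab c" by (simp add: ST_def c)
    moreover have "tm_step T C = C" using True by (simp add: tm_step_def C)
    ultimately show ?thesis using inv rel by auto
  next
    case False
    obtain s' a' d where del: "tm_delta T s (tp h) = (s', a', d)" by (cases "tm_delta T s (tp h)") auto
    have s'n: "s' < tm_nst T" and a'G: "a' \<in> \<Gamma>" using wf sn tpG del unfolding wf_tm_def by (metis fst_conv snd_conv)+
    have aB: "a < B" using a cdB tpG by auto
    have a'B: "cd bl a' < B" using cdB a'G by auto
    have e: "nthc (s * B + a) ?tab = pr s' (pr (cd bl a') (dcode d))"
      using lookup[OF sn aB] del a by (simp add: ent_def)
    have ts: "tm_step T C = (s', tp(h := a'), h + (case d of Lmv \<Rightarrow> -1 | Rmv \<Rightarrow> 1 | Smv \<Rightarrow> 0))"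
      using False del by (simp add: tm_step_def C)
    have inv': "invc \<Gamma> T (tm_step T C)" using ts s'n a'G tpG by (simp add: invc_def)
    show ?thesis
    proof (cases d)
      case Lmv
      let ?c' = "pr s' (pr (l div B) (pr (l mod B) (r * B + cd bl a')))"
      have st: "ST B (pr ?tab c) = pr ?tab ?c'" using False e Lmv by (simp add: ST_def c)
      have r3: "rel3 B bl (tp(h := a')) (h - 1) (pr (l div B) (pr (l mod B) (r * B + cd bl a')))"
        unfolding rel3_def
      proof (intro exI conjI allI, rule refl)
        show "l mod B = cd bl ((tp(h := a')) (h - 1))" using L[rule_format, of 0] by (simp add: dg_0)
      next
        fix k
        show "dg B k (l div B) = cd bl ((tp(h := a')) (h - 1 - 1 - int k))"
          using L[rule_format, of "Suc k"] by (simp add: dg_Suc algebra_simps)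
      next
        fix k
        show "dg B k (r * B + cd bl a') = cd bl ((tp(h := a')) (h - 1 + 1 + int k))"
        proof (cases k)
          case 0 then show ?thesis using B0' a'B by (simp add: dg_push0)
        next
          case (Suc j) then show ?thesis using R[rule_format, of j] by (simp only: dg_pushS[OF B0' a'B]) (simp add: algebra_simps)
        qed
      qed
      have "relc B bl (tm_step T C) ?c'" using r3 unfolding ts Lmv relc_def by simp
      then show ?thesis using st inv' by blast
    next
      case Rmv
      let ?c' = "pr s' (pr (l * B + cd bl a') (pr (r mod B) (r div B)))"
      have st: "ST B (pr ?tab c) = pr ?tab ?c'" using False e Rmv by (simp add: ST_def c)
      have r3: "rel3 B bl (tp(h := a')) (h + 1) (pr (l * B + cd bl a') (pr (r mod B) (r div B)))"
        unfolding rel3_def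
      proof (intro exI conjI allI, rule refl)
        show "r mod B = cd bl ((tp(h := a')) (h + 1))" using R[rule_format, of 0] by (simp add: dg_0)
      next
        fix k
        show "dg B k (l * B + cd bl a') = cd bl ((tp(h := a')) (h + 1 - 1 - int k))"
        proof (cases k)
          case 0 then show ?thesis using B0' a'B by (simp add: dg_push0)
        next
          case (Suc j) then show ?thesis using L[rule_format, of j] by (simp only: dg_pushS[OF B0' a'B]) (simp add: algebra_simps)
        qed
      next
        fix k
        show "dg B k (r div B) = cd bl ((tp(h := a')) (h + 1 + 1 + int k))"
          using R[rule_format, of "Suc k"] by (simp add: dg_Suc algebra_simps)
      qed
      have "relc B bl (tm_step T C) ?c'" using r3 unfolding ts Rmv relc_def by simp
      then show ?thesis using st inv' by blast
    next
      case Smv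
      let ?c' = "pr s' (pr l (pr (cd bl a') r))"
      have st: "ST B (pr ?tab c) = pr ?tab ?c'" using False e Smv by (simp add: ST_def c)
      have r3: "rel3 B bl (tp(h := a')) h (pr l (pr (cd bl a') r))"
        unfolding rel3_def using L R by simp
      have "relc B bl (tm_step T C) ?c'" using r3 unfolding ts Smv relc_def by simp
      then show ?thesis using st inv' by blast
    qed
  qed
qed


lemma iter_ok:
  assumes "invc \<Gamma> T C" "relc B bl C c"
  shows "\<exists>c'. (ST B ^^ n) (pr (tabT B bl T) c) = pr (tabT B bl T) c' \<and>
      invc \<Gamma> T ((tm_step T ^^ n) C) \<and> relc B bl ((tm_step T ^^ n) C) c'"
proof (induction n)
  case 0 then show ?case using assms by auto
next
  case (Suc n)
  then obtain c' where c': "(ST B ^^ n) (pr (tabT B bl T) c) = pr (tabT B bl T) c'"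
    "invc \<Gamma> T ((tm_step T ^^ n) C)" "relc B bl ((tm_step T ^^ n) C) c'" by blast
  from step_ok[OF c'(2,3)] obtain c'' where
    "ST B (pr (tabT B bl T) c') = pr (tabT B bl T) c''"
    "invc \<Gamma> T (tm_step T ((tm_step T ^^ n) C))" "relc B bl (tm_step T ((tm_step T ^^ n) C)) c''" by blast
  then show ?case using c'(1) by auto
qed

lemma init_ok:
  assumes xs: "set xs \<subseteq> \<Gamma>"
  shows "invc \<Gamma> T (tm_init bl xs) \<and>
    relc B bl (tm_init bl xs) (pr 0 (pr 0 (pr (encv B bl xs mod B) (encv B bl xs div B))))"
proof
  have "2 \<le> tm_nst T" using wf unfolding wf_tm_def by simp
  moreover have "\<forall>i. (if 0 \<le> i \<and> i < int (length xs) then xs ! nat i else bl) \<in> \<Gamma>"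
    using xs blG by (auto intro!: nth_mem[THEN subsetD[OF xs]])
  ultimately show "invc \<Gamma> T (tm_init bl xs)" by (simp add: invc_def tm_init_def)
next
  have cB: "\<forall>x\<in>set xs. cd bl x < B" using xs cdB by auto
  let ?N = "encv B bl xs"
  let ?tp = "\<lambda>i. if 0 \<le> i \<and> i < int (length xs) then xs ! nat i else bl"
  have "rel3 B bl ?tp 0 (pr 0 (pr (?N mod B) (?N div B)))"
    unfolding rel3_def
  proof (intro exI conjI allI, rule refl)
    show "?N mod B = cd bl (?tp 0)" using dg_encv[OF B0' cB, of 0] by (simp add: dg_0)
  next
    fix k show "dg B k 0 = cd bl (?tp (0 - 1 - int k))" by simp
  next
    fix k show "dg B k (?N div B) = cd bl (?tp (0 + 1 + int k))"
      using dg_encv[OF B0' cB, of "Suc k"] by (simp add: dg_Suc nat_add_distrib)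
  qed
  then show "relc B bl (tm_init bl xs) (pr 0 (pr 0 (pr (?N mod B) (?N div B))))"
    by (simp add: relc_def tm_init_def)
qed

lemma halt_stay: "(tm_step T ^^ n) (1, tp, h) = (1, tp, h)"
  by (rule funpow_fix) (simp add: tm_step_def)

lemma mvl_step:
  assumes "rel3 B bl tp h (pr l (pr a r))" "\<forall>i. tp i \<in> \<Gamma>"
  shows "MVL B (pr l (pr a r)) = pr (l div B) (pr (l mod B) (r * B + a)) \<and>
    rel3 B bl tp (h - 1) (pr (l div B) (pr (l mod B) (r * B + a)))"
proof
  show "MVL B (pr l (pr a r)) = pr (l div B) (pr (l mod B) (r * B + a))" by (simp add: MVL_def)
next
  from assms(1) have a: "a = cd bl (tp h)" and L: "\<forall>k. dg B k l = cd bl (tp (h - 1 - int k))"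
    and R: "\<forall>k. dg B k r = cd bl (tp (h + 1 + int k))" unfolding rel3_def by auto
  have aB: "a < B" using a assms(2) cdB by auto
  show "rel3 B bl tp (h - 1) (pr (l div B) (pr (l mod B) (r * B + a)))"
    unfolding rel3_def
  proof (intro exI conjI allI, rule refl)
    show "l mod B = cd bl (tp (h - 1))" using L[rule_format, of 0] by (simp add: dg_0)
  next
    fix k
    show "dg B k (l div B) = cd bl (tp (h - 1 - 1 - int k))"
      using L[rule_format, of "Suc k"] by (simp add: dg_Suc algebra_simps)
  next
    fix k
    show "dg B k (r * B + a) = cd bl (tp (h - 1 + 1 + int k))"
    proof (cases k)
      case 0 then show ?thesis using B0' aB a by (simp add: dg_push0)
    next
      case (Suc j) then show ?thesis using R[rule_format, of j] by (simp only: dg_pushS[OF B0' aB]) (simp add: algebra_simps)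
    qed
  qed
qed

lemma mvl_iter:
  assumes "rel3 B bl tp h (pr l (pr a r))" "\<forall>i. tp i \<in> \<Gamma>"
  shows "\<exists>a' r'. (MVL B ^^ j) (pr l (pr a r)) = pr (l div B ^ j) (pr a' r') \<and>
    rel3 B bl tp (h - int j) (pr (l div B ^ j) (pr a' r'))"
proof (induction j)
  case 0 then show ?case using assms(1) by auto
next
  case (Suc j)
  then obtain a' r' where IH: "(MVL B ^^ j) (pr l (pr a r)) = pr (l div B ^ j) (pr a' r')"
    "rel3 B bl tp (h - int j) (pr (l div B ^ j) (pr a' r'))" by blast
  note m = mvl_step[OF IH(2) assms(2)]
  have d: "l div B ^ j div B = l div B ^ Suc j" by (metis div_mult2_eq power_Suc2)
  show ?case using m IH(1) d by (auto simp: algebra_simps)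
qed


lemma out_ok:
  assumes rel: "relc B bl (1, tp, h) c" and tpG: "\<forall>i. tp i \<in> \<Gamma>" and out: "tm_tape_output \<Sigma> bl tp ys"
    and SG: "\<Sigma> \<subseteq> \<Gamma>" and blS: "bl \<notin> \<Sigma>"
  shows "pf c = 1 \<and> outc B (ps c) = encv B bl ys"
proof -
  from rel obtain c3 where c: "c = pr 1 c3" and r3: "rel3 B bl tp h c3" by (auto simp: relc_def)
  from r3 obtain l a r where c3: "c3 = pr l (pr a r)" unfolding rel3_def by auto
  from mvl_iter[OF r3[unfolded c3] tpG, of l] obtain a' r' where
    mi: "(MVL B ^^ l) (pr l (pr a r)) = pr (l div B ^ l) (pr a' r')" and
    r3': "rel3 B bl tp (h - int l) (pr (l div B ^ l) (pr a' r'))" by blast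
  have l0: "l div B ^ l = 0" using pow_ge[OF B2, of l] by simp
  define h' where "h' = h - int l"
  have nN: "normN B c3 = a' + B * r'" unfolding normN_def c3 using mi l0 by simp
  from r3' l0 have a': "a' = cd bl (tp h')" and Lb: "\<forall>k. cd bl (tp (h' - 1 - int k)) = 0"
    and R': "\<forall>k. dg B k r' = cd bl (tp (h' + 1 + int k))" unfolding rel3_def h'_def by auto
  have a'B: "a' < B" using a' tpG cdB by auto
  have dN: "dg B k (a' + B * r') = cd bl (tp (h' + int k))" for k
  proof (cases k)
    case 0 then show ?thesis using a'B a' by (simp add: dg_0)
  next
    case (Suc j) then show ?thesis using a'B R'[rule_format, of j] by (simp add: dg_Suc algebra_simps)
  qed
  have blank_left: "tp i = bl" if "i < h'" for i
  proof -
    have "i = h' - 1 - int (nat (h' - 1 - i))" using that by simp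
    then show ?thesis using Lb[rule_format, of "nat (h' - 1 - i)"] by (metis cd_0_iff)
  qed
  from out obtain a0 where ysS: "set ys \<subseteq> \<Sigma>" and
    tpd: "\<forall>i. tp i = (if a0 \<le> i \<and> i < a0 + int (length ys) then ys ! nat (i - a0) else bl)"
    unfolding tm_tape_output_def by blast
  have cyB: "\<forall>x\<in>set ys. cd bl x < B" using ysS SG cdB by auto
  have oc: "outc B (ps c) = (STP B ^^ (a' + B * r')) (a' + B * r')"
    using nN c by (simp add: outc_def)
  show ?thesis
  proof (cases "ys = []")
    case True
    then have "\<forall>i. tp i = bl" using tpd by simp
    then have "\<And>k. dg B k (a' + B * r') = dg B k 0" using dN by simp
    then have N0: "a' + B * r' = 0" by (rule dg_ext[OF B2])
    have "outc B (ps c) = 0" using oc unfolding N0 by simp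
    then show ?thesis using True c by simp
  next
    case False
    have y0: "ys ! 0 \<noteq> bl" using False ysS blS nth_mem by force
    have "tp a0 = ys ! 0" using tpd False by simp
    then have na: "\<not> a0 < h'" using blank_left y0 by auto
    define p where "p = nat (a0 - h')"
    have a0p: "a0 = h' + int p" using na p_def by simp
    let ?E = "encv B bl ys"
    have eq: "a' + B * r' = B ^ p * ?E"
    proof (rule dg_ext[OF B2])
      fix k
      have t: "tp (h' + int k) = (if p \<le> k \<and> k < p + length ys then ys ! (k - p) else bl)"
        using tpd[rule_format, of "h' + int k"] a0p by (auto simp: nat_diff_distrib)
      show "dg B k (a' + B * r') = dg B k (B ^ p * ?E)"
        unfolding dN dg_pow[OF B0'] dg_encv[OF B0' cyB] t by auto
    qed
    have "?E mod B = cd bl (ys ! 0)" using dg_encv[OF B0' cyB, of 0] False by (simp add: dg_0)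
    then have Em: "?E mod B \<noteq> 0" using y0 cd_0_iff by metis
    then have "?E \<noteq> 0" by (metis mod_0)
    then have "p \<le> B ^ p * ?E" using pow_ge[OF B2, of p] by (metis le_trans less_imp_le_nat mult_le_mono2 mult.right_neutral not_less_eq_eq not_one_le_zero le0 Suc_leI neq0_conv mult_le_cancel1 one_le_mult_iff)
    then have "(STP B ^^ (a' + B * r')) (a' + B * r') = ?E"
      unfolding eq using STP_iter[OF Em B0', of "B ^ p * ?E" p] by simp
    then show ?thesis using c oc by simp
  qed
qed

lemma tm_cons:
  assumes comp: "tm_computes_within \<Sigma> bl T xs ys k" and xsS: "set xs \<subseteq> \<Sigma>"
    and SG: "\<Sigma> \<subseteq> \<Gamma>" and blS: "bl \<notin> \<Sigma>"
  shows "\<exists>c'. (ST B ^^ k) (pr (tabT B bl T) (pr 0 (pr 0 (pr (encv B bl xs mod B) (encv B bl xs div B)))))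
     = pr (tabT B bl T) c' \<and> pf c' = 1 \<and> outc B (ps c') = encv B bl ys"
proof -
  obtain j where jk: "j \<le> k" and
    cj: "case (tm_step T ^^ j) (tm_init bl xs) of (s, tp, h) \<Rightarrow> s = 1 \<and> tm_tape_output \<Sigma> bl tp ys"
    using comp unfolding tm_computes_within_def by (elim exE conjE) simp
  obtain s tp h where Cj: "(tm_step T ^^ j) (tm_init bl xs) = (s, tp, h)" by (rule prod_cases3)
  from cj have s1: "s = 1" and out: "tm_tape_output \<Sigma> bl tp ys" unfolding Cj by simp_all
  obtain d where kd: "k = d + j" using jk le_iff_add[of j k] by (auto simp: add.commute)
  have "(tm_step T ^^ k) (tm_init bl xs) = (tm_step T ^^ d) ((tm_step T ^^ j) (tm_init bl xs))"
    unfolding kd funpow_add by simp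
  then have Ck: "(tm_step T ^^ k) (tm_init bl xs) = (1, tp, h)" using Cj s1 halt_stay by simp
  from init_ok xsS SG have i0: "invc \<Gamma> T (tm_init bl xs)"
    "relc B bl (tm_init bl xs) (pr 0 (pr 0 (pr (encv B bl xs mod B) (encv B bl xs div B))))" by auto
  from iter_ok[OF i0, of k] obtain c' where
    "(ST B ^^ k) (pr (tabT B bl T) (pr 0 (pr 0 (pr (encv B bl xs mod B) (encv B bl xs div B))))) = pr (tabT B bl T) c'"
    "invc \<Gamma> T (1, tp, h)" "relc B bl (1, tp, h) c'" unfolding Ck by blast
  moreover have "\<forall>i. tp i \<in> \<Gamma>" using calculation(2) by (simp add: invc_def)
  moreover note out_ok[OF calculation(3) calculation(4) out SG blS]
  ultimately show ?thesis by (intro exI[of _ c']) simp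
qed

end


context simloc
begin

lemma AllStep_iter: "length ys \<le> n \<Longrightarrow>
  (AllStep ^^ n) (pr r (pr (list_encode ys) ok)) =
    pr r (pr 0 (ok * (if \<forall>y\<in>set ys. Cons r (pf y) (ps y) then 1 else 0)))"
proof (induction ys arbitrary: n ok)
  case Nil
  have "AllStep (pr r (pr 0 ok)) = pr r (pr 0 ok)" by (simp add: AllStep_def)
  then show ?case by (simp add: funpow_fix)
next
  case (Cons y ys)
  then obtain n' where n: "n = Suc n'" "length ys \<le> n'" by (cases n) auto
  have "AllStep (pr r (pr (list_encode (y # ys)) ok)) =
      pr r (pr (list_encode ys) (ok * (if Cons r (pf y) (ps y) then 1 else 0)))"
    by (simp add: AllStep_def)
  then show ?case using Cons.IH[OF n(2)] n(1)
    by (simp only: funpow_Suc_right comp_def) simp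
qed

lemma AllOk_eq: "AllOk r (list_encode ys) = (if \<forall>y\<in>set ys. Cons r (pf y) (ps y) then 1 else 0)"
  unfolding AllOk_def using AllStep_iter[OF len_le_le, of ys r 1] by simp

lemma BM_iter: "n \<le> Suc d \<Longrightarrow> (BM ^^ n) (pr d (pr 0 (Suc d))) =
   pr d (pr n (if \<exists>i<n. AllOk i d = 1 then LEAST i. AllOk i d = 1 else Suc d))"
proof (induction n)
  case 0 then show ?case by simp
next
  case (Suc n)
  let ?P = "\<lambda>i. AllOk i d = 1"
  have IH: "(BM ^^ n) (pr d (pr 0 (Suc d))) = pr d (pr n (if \<exists>i<n. ?P i then LEAST i. ?P i else Suc d))"
    using Suc by simp
  let ?R0 = "if \<exists>i<n. ?P i then LEAST i. ?P i else Suc d"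
  have bm: "BM (pr d (pr n res)) = pr d (pr (Suc n) (if res = Suc d \<and> ?P n then n else res))" for res
    by (simp add: BM_def)
  have eqn: "(if ?R0 = Suc d \<and> ?P n then n else ?R0)
        = (if \<exists>i<Suc n. ?P i then LEAST i. ?P i else Suc d)"
  proof (cases "\<exists>i<n. ?P i")
    case True
    then obtain i where "i < n" "?P i" by blast
    then have "(LEAST i. ?P i) < n" by (meson Least_le le_less_trans)
    then have "(LEAST i. ?P i) \<noteq> Suc d" using Suc.prems by simp
    moreover have "\<exists>i<Suc n. ?P i" using True less_SucI by blast
    ultimately show ?thesis using True by auto
  next
    case False
    show ?thesis
    proof (cases "?P n")
      case True
      have "(LEAST i. ?P i) = n" using False True by (intro Least_equality) (auto simp: not_le[symmetric])
      then show ?thesis using False True by auto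
    next
      case F2: False
      have "\<not> (\<exists>i<Suc n. ?P i)" using False F2 less_Suc_eq by auto
      then show ?thesis using False F2 by auto
    qed
  qed
  have "(BM ^^ Suc n) (pr d (pr 0 (Suc d))) = BM (pr d (pr n ?R0))" using IH by simp
  also have "\<dots> = pr d (pr (Suc n) (if ?R0 = Suc d \<and> ?P n then n else ?R0))" by (rule bm)
  also have "\<dots> = pr d (pr (Suc n) (if \<exists>i<Suc n. ?P i then LEAST i. ?P i else Suc d))" by (simp only: eqn)
  finally show ?case .
qed

lemma Lrn_eq: "Lrn d = (if \<exists>i<Suc d. AllOk i d = 1 then LEAST i. AllOk i d = 1 else Suc d)"
  unfolding Lrn_def using BM_iter[of "Suc d" d] by simp

lemma Sfun_eq: assumes "Cons r x y" "\<And>y'. Cons r x y' \<Longrightarrow> y' = y" shows "Sfun r x = Some y"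
proof -
  have "(LEAST y. Cons r x y) = y"
    by (rule Least_equality) (use assms in fastforce)+
  then show ?thesis using assms(1) unfolding Sfun_def by auto
qed

lemma learn:
  assumes inj_enc: "\<And>y y'. encc B bl (phic y) = encc B bl (phic y') \<Longrightarrow> y = y'"
    and good: "\<forall>x. f x \<noteq> None \<longrightarrow> Cons rs x (the (f x))"
    and rw: "range w = {x \<in> I. f x \<noteq> None}"
  shows "\<exists>t0 r. \<forall>t\<ge>t0. Lrn (examples_code f w t) = r \<and> (\<forall>x\<in>I. f x \<noteq> None \<longrightarrow> Sfun r x = f x)"
proof -
  define Pt where "Pt t r \<longleftrightarrow> (\<forall>i\<le>t. Cons r (w i) (the (f (w i))))" for t r
  have wdom: "f (w i) \<noteq> None" for i using rw by auto
  have data: "AllOk r (examples_code f w t) = (if Pt t r then 1 else 0)" for r t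
    unfolding examples_code_def AllOk_eq Pt_def by (auto simp: le_less_Suc_eq less_Suc_eq_le)
  have dl: "Suc t \<le> examples_code f w t" for t
    unfolding examples_code_def using len_le_le[of "map (\<lambda>i. pr (w i) (the (f (w i)))) [0..<Suc t]"] by simp
  have Prs: "Pt t rs" for t using good wdom by (simp add: Pt_def)
  have Pmono: "Pt t r \<Longrightarrow> t' \<le> t \<Longrightarrow> Pt t' r" for t t' r by (simp add: Pt_def)
  define r0 where "r0 = (LEAST r. \<forall>t. Pt t r)"
  have Prs': "\<forall>t. Pt t rs" using Prs by blast
  have r0all: "\<forall>t. Pt t r0" unfolding r0_def by (rule LeastI[of _ rs]) (rule Prs')
  have r0le: "r0 \<le> rs" unfolding r0_def by (rule Least_le) (rule Prs')
  have "\<forall>r<r0. \<exists>t. \<not> Pt t r" unfolding r0_def using not_less_Least by blast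
  then obtain tf where tf: "\<And>r. r < r0 \<Longrightarrow> \<not> Pt (tf r) r" by metis
  define t0 where "t0 = rs + (\<Sum>r<r0. tf r)"
  have tft0: "tf r \<le> t0" if "r < r0" for r
  proof -
    have "tf r \<le> (\<Sum>r<r0. tf r)" using that by (intro member_le_sum) auto
    then show ?thesis by (simp add: t0_def)
  qed
  have conv: "Lrn (examples_code f w t) = r0" if "t0 \<le> t" for t
  proof -
    have nP: "\<not> Pt t r" if "r < r0" for r using tf[OF that] Pmono tft0[OF that] \<open>t0 \<le> t\<close> by (meson le_trans)
    have Ls: "(LEAST r. Pt t r) = r0" by (rule Least_equality) (use r0all nP in \<open>auto simp: not_less[symmetric]\<close>)
    have "r0 < Suc (examples_code f w t)" using r0le dl[of t] that by (simp add: t0_def)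
    then have ex: "\<exists>i<Suc (examples_code f w t). AllOk i (examples_code f w t) = 1" using r0all data by auto
    have "(LEAST i. AllOk i (examples_code f w t) = 1) = (LEAST r. Pt t r)" using data by simp
    then show ?thesis unfolding Lrn_eq using ex Ls by simp
  qed
  have func: "Cons r x y \<Longrightarrow> Cons r x y' \<Longrightarrow> y' = y" for r x y y'
    unfolding Cons_def using inj_enc by metis
  have agree: "Sfun r0 x = f x" if "x \<in> I" "f x \<noteq> None" for x
  proof -
    from that rw obtain i where x: "x = w i" by (metis (mono_tags, lifting) mem_Collect_eq rangeE)
    have "Cons r0 x (the (f x))" using r0all unfolding Pt_def x by blast
    then have "Sfun r0 x = Some (the (f x))" using func by (intro Sfun_eq) auto
    then show ?thesis using that by auto
  qed
  show ?thesis using conv agree by blast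
qed

end


lemma encv_inj:
  assumes "0 < B" "\<forall>x\<in>set xs. cd bl x < B \<and> cd bl x \<noteq> 0" "\<forall>x\<in>set ys. cd bl x < B \<and> cd bl x \<noteq> 0"
    "encv B bl xs = encv B bl ys"
  shows "xs = ys"
  using assms(2-4)
proof (induction xs arbitrary: ys)
  case Nil
  show ?case
  proof (cases ys)
    case (Cons y ys')
    then have "encv B bl ys mod B = cd bl y" using Nil.prems(2) assms(1) by simp
    then show ?thesis using Nil.prems Cons by simp
  qed simp
next
  case (Cons x xs)
  show ?case
  proof (cases ys)
    case Nil
    have "encv B bl (x # xs) mod B = cd bl x" using Cons.prems(1) assms(1) by simp
    then show ?thesis using Cons.prems Nil by simp
  next
    case (Cons y ys')
    note yy = this
    have m: "encv B bl (x # xs) mod B = cd bl x" "encv B bl ys mod B = cd bl y"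
      using Cons.prems(1,2) assms(1) yy by simp_all
    have d: "encv B bl (x # xs) div B = encv B bl xs" "encv B bl ys div B = encv B bl ys'"
      using Cons.prems(1,2) assms(1) yy by simp_all
    have "cd bl x = cd bl y" using m Cons.prems(3) by metis
    then have "cd bl (cd bl x) = cd bl (cd bl y)" by (rule arg_cong)
    then have "x = y" by (simp only: cd_cd)
    moreover have "xs = ys'"
    proof (rule Cons.IH)
      show "\<forall>x\<in>set xs. cd bl x < B \<and> cd bl x \<noteq> 0" using Cons.prems(1) by simp
      show "\<forall>x\<in>set ys'. cd bl x < B \<and> cd bl x \<noteq> 0" using Cons.prems(2) yy by simp
      show "encv B bl xs = encv B bl ys'" using d Cons.prems(3) by metis
    qed
    ultimately show ?thesis using yy by simp
  qed
qed

lemma tcw_mono: assumes "tm_computes_within \<Sigma> bl T xs ys k" "k \<le> k'" shows "tm_computes_within \<Sigma> bl T xs ys k'"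
proof -
  obtain j where j: "j \<le> k" and
    P: "case (tm_step T ^^ j) (tm_init bl xs) of (s, tp, h) \<Rightarrow> s = 1 \<and> tm_tape_output \<Sigma> bl tp ys"
    using assms(1) unfolding tm_computes_within_def by (elim exE conjE) simp
  have jk: "j \<le> k'" using j assms(2) by simp
  show ?thesis unfolding tm_computes_within_def
    apply (rule exI[of _ j])
    apply (rule conjI)
     apply (rule jk)
    apply (rule P)
    done
qed

theorem theorem3p2:
  fixes q Q :: "nat \<Rightarrow> nat \<Rightarrow> nat"
    and sz :: "nat \<Rightarrow> nat"
    and \<Sigma> \<Gamma> :: "nat set" and blank :: nat
    and \<phi> :: "nat \<Rightarrow> nat list"
    and Ms :: "cmodel set"
  assumes "total_rec2 q" and "mono2 q"
    and "total_rec2 Q" and "mono2 Q"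
    and "total_rec sz"
    and "finite \<Sigma>" and "finite \<Gamma>" and "blank \<notin> \<Sigma>" and "\<Sigma> \<union> {blank} \<subseteq> \<Gamma>"
    and "inj \<phi>" and "\<forall>x. set (\<phi> x) \<subseteq> \<Sigma>" and "total_rec (\<lambda>x. list_encode (\<phi> x))"
    and "Ms \<subseteq> {M. comp_model M}"
    and "q_ECTT q \<Sigma> \<Gamma> blank \<phi> Ms"
  shows "solves_learning (Qclass Q sz Ms)"
proof -
  note rq = assms(1) and mq = assms(2) and rQ = assms(3) and rsz = assms(5) and finG = assms(7)
    and blS = assms(8) and SbG = assms(9) and injp = assms(10) and phS = assms(11) and rph = assms(12)
    and ectt = assms(14)
  define B where "B = Max \<Gamma> + 2"
  have blG: "blank \<in> \<Gamma>" and SG: "\<Sigma> \<subseteq> \<Gamma>" using SbG by auto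
  have B2: "2 \<le> B" by (simp add: B_def)
  have cdB: "\<forall>a\<in>\<Gamma>. cd blank a < B"
  proof
    fix a assume a: "a \<in> \<Gamma>"
    have "a \<le> Max \<Gamma>" "blank \<le> Max \<Gamma>" using a blG finG by auto
    then show "cd blank a < B" unfolding cd_def B_def by auto
  qed
  define phic where "phic = (\<lambda>x. list_encode (\<phi> x))"
  interpret S: simloc B blank q Q sz phic
    by unfold_locales (use B2 rq rQ rsz rph in \<open>auto simp: phic_def\<close>)
  have encc_phic: "encc B blank (phic y) = encv B blank (\<phi> y)" for y by (simp add: phic_def encc_eq)
  have okS: "\<forall>x\<in>set (\<phi> y). cd blank x < B \<and> cd blank x \<noteq> 0" for y
  proof
    fix x assume "x \<in> set (\<phi> y)"
    then have xS: "x \<in> \<Sigma>" using phS by auto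
    then have "x \<in> \<Gamma>" using SG by auto
    then have "cd blank x < B" using cdB by auto
    moreover have "x \<noteq> blank" using xS blS by auto
    then have "cd blank x \<noteq> 0" by (simp add: cd_0_iff)
    ultimately show "cd blank x < B \<and> cd blank x \<noteq> 0" by simp
  qed
  have inj_enc: "y = y'" if "encc B blank (phic y) = encc B blank (phic y')" for y y'
  proof -
    have "\<phi> y = \<phi> y'" using encv_inj[OF _ okS okS] that B2 unfolding encc_phic by simp
    then show ?thesis using injp by (simp add: inj_eq)
  qed
  show ?thesis unfolding solves_learning_def
  proof (intro exI[of _ S.Lrn] exI[of _ UNIV] exI[of _ S.Sfun] conjI allI ballI impI)
    show "total_rec S.Lrn" by (rule S.T_Lrn)
    show "decidable_set UNIV" unfolding decidable_set_def by (simp add: T_const)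
    show "S.Lrn n \<in> UNIV" for n by simp
    show "partial_rec (S.Sfun r)" for r by (rule S.partial_Sfun)
  next
    fix f :: "nat \<Rightarrow> nat option" and I :: "nat set" and w :: "nat \<Rightarrow> nat"
    assume fQ: "f \<in> Qclass Q sz Ms" and rw: "range w = {x \<in> I. f x \<noteq> None}"
    from fQ obtain c M K where MMs: "M \<in> Ms" and fM: "mfun M = f"
      and bnd: "\<forall>x. f x \<noteq> None \<longrightarrow> mtime M x \<le> K * Q c (sz x) + K"
      unfolding Qclass_def by blast
    from ectt MMs obtain cT T where wf: "wf_tm \<Gamma> T" and
      sim: "\<forall>x. mhalts M x \<longrightarrow> tm_computes_within \<Sigma> blank T (\<phi> x) (\<phi> (the (mfun M x))) (q cT (mtime M x))"
      unfolding q_ECTT_def by blast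
    define rs where "rs = pr (tabT B blank T) (pr cT (pr c K))"
    have good: "\<forall>x. f x \<noteq> None \<longrightarrow> S.Cons rs x (the (f x))"
    proof (intro allI impI)
      fix x assume fx: "f x \<noteq> None"
      then have hx: "mhalts M x" using fM unfolding mfun_def by (auto split: if_splits)
      have kb: "S.kb rs x = q cT (K * Q c (sz x) + K)" by (simp add: S.kb_def rs_def)
      have "q cT (mtime M x) \<le> q cT (K * Q c (sz x) + K)"
        using mq bnd fx unfolding mono2_def by blast
      then have comp: "tm_computes_within \<Sigma> blank T (\<phi> x) (\<phi> (the (f x))) (S.kb rs x)"
        using tcw_mono sim hx fM kb by metis
      from tm_cons[OF wf blG cdB B2 comp phS[rule_format] SG blS] obtain c' where
        c': "(ST B ^^ S.kb rs x) (pr (tabT B blank T) (pr 0 (pr 0 (pr (encv B blank (\<phi> x) mod B) (encv B blank (\<phi> x) div B)))))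
          = pr (tabT B blank T) c'" "pf c' = 1" "outc B (ps c') = encv B blank (\<phi> (the (f x)))"
        by blast
      have "S.fin rs x = c'" unfolding S.fin_def S.initc_def encc_phic using c'(1) by (simp add: rs_def)
      then show "S.Cons rs x (the (f x))" unfolding S.Cons_def encc_phic using c' by simp
    qed
    show "\<exists>t0 r. \<forall>t\<ge>t0. S.Lrn (examples_code f w t) = r \<and> (\<forall>x\<in>I. f x \<noteq> None \<longrightarrow> S.Sfun r x = f x)"
      by (rule S.learn[OF inj_enc good rw])
  qed
qed


end
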